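(* Let $\rho$ be an $i$-polymatroid on $E$ with $i$-dual $\rho^*$, and assume that for every $e\in E$: (1) $\rho(E-e)=\rho(E)$ (equivalently $\rho^*(e)=i$), and (2) $\rho^*(E-e)=\rho^*(E)$ (equivalently $\rho(e)=i$). Then for each positive integer $k$ the map $\phi:\Delta_\rho^k\to\Delta_{\rho^*}^k$ given by $\phi((M_1,\dots,M_k))=(M'_1,\dots,M'_k)$, where $M'_s=(M_s\backslash L_s)^*\oplus U_{0,L_s}$ and $L_s$ is the set of loops of $M_s$, is a bijection. Consequently $\chi(\rho;x)=\chi(\rho^*;x)$.
   Context: A polymatroid on $E$ is a function $\rho:2^E\to\mathbb{Z}$ that is normalized, non-decreasing and submodular; it is an $i$-polymatroid if $\rho(\{e\})\le i$ for all $e$. Its $i$-dual is $\rho^*(X)=i|X|-\rho(E)+\rho(E-X)$. $\Delta_\rho^k$ is the set of $k$-tuples $(N_1,\dots,N_k)$ of matroids on $E$ with $\rho=r_{N_1}+\cdots+r_{N_k}$. $U_{0,L}$ is the rank-$0$ matroid on $L$. The chromatic polynomial $\chi(\rho;x)$ is the polynomial whose value at each positive integer $k$ is $|\Delta_\rho^k|$. *)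

theory Defs
  imports Main "HOL-Computational_Algebra.Polynomial"
begin

definition polymatroid :: "'a set \<Rightarrow> ('a set \<Rightarrow> int) \<Rightarrow> bool" where
  "polymatroid E \<rho> \<longleftrightarrow>
     \<rho> {} = 0 \<and>
     (\<forall>X Y. X \<subseteq> Y \<and> Y \<subseteq> E \<longrightarrow> \<rho> X \<le> \<rho> Y) \<and>
     (\<forall>X Y. X \<subseteq> E \<and> Y \<subseteq> E \<longrightarrow> \<rho> (X \<union> Y) + \<rho> (X \<inter> Y) \<le> \<rho> X + \<rho> Y)"

definition i_polymatroid :: "nat \<Rightarrow> 'a set \<Rightarrow> ('a set \<Rightarrow> int) \<Rightarrow> bool" where
  "i_polymatroid i E \<rho> \<longleftrightarrow> polymatroid E \<rho> \<and> (\<forall>e\<in>E. \<rho> {e} \<le> int i)"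

definition i_dual :: "nat \<Rightarrow> 'a set \<Rightarrow> ('a set \<Rightarrow> int) \<Rightarrow> ('a set \<Rightarrow> int)" where
  "i_dual i E \<rho> = (\<lambda>X. int i * int (card X) - \<rho> E + \<rho> (E - X))"

text \<open>A matroid on ground set E is represented by its rank function; to make the
representation canonical we require r X = r (X \<inter> E) for all X.\<close>

definition matroid_rank :: "'a set \<Rightarrow> ('a set \<Rightarrow> nat) \<Rightarrow> bool" where
  "matroid_rank E r \<longleftrightarrow>
     (\<forall>X. r X = r (X \<inter> E)) \<and>
     (\<forall>X. X \<subseteq> E \<longrightarrow> r X \<le> card X) \<and>
     (\<forall>X Y. X \<subseteq> Y \<and> Y \<subseteq> E \<longrightarrow> r X \<le> r Y) \<and>
     (\<forall>X Y. X \<subseteq> E \<and> Y \<subseteq> E \<longrightarrow> r (X \<union> Y) + r (X \<inter> Y) \<le> r X + r Y)"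

definition loops :: "'a set \<Rightarrow> ('a set \<Rightarrow> nat) \<Rightarrow> 'a set" where
  "loops E r = {e \<in> E. r {e} = 0}"

definition mdelete :: "'a set \<Rightarrow> ('a set \<Rightarrow> nat) \<Rightarrow> 'a set \<Rightarrow> ('a set \<Rightarrow> nat)" where
  "mdelete G r L = (\<lambda>X. r (X \<inter> (G - L)))"

definition mdual :: "'a set \<Rightarrow> ('a set \<Rightarrow> nat) \<Rightarrow> ('a set \<Rightarrow> nat)" where
  "mdual G r = (\<lambda>X. card (X \<inter> G) + r (G - X) - r G)"

definition U0 :: "'a set \<Rightarrow> ('a set \<Rightarrow> nat)" where
  "U0 L = (\<lambda>X. 0)"

definition direct_sum :: "'a set \<Rightarrow> ('a set \<Rightarrow> nat) \<Rightarrow> 'a set \<Rightarrow> ('a set \<Rightarrow> nat) \<Rightarrow> ('a set \<Rightarrow> nat)" where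
  "direct_sum G1 r1 G2 r2 = (\<lambda>X. r1 (X \<inter> G1) + r2 (X \<inter> G2))"

definition phi_matroid :: "'a set \<Rightarrow> ('a set \<Rightarrow> nat) \<Rightarrow> ('a set \<Rightarrow> nat)" where
  "phi_matroid E r =
     (let L = loops E r in
      direct_sum (E - L) (mdual (E - L) (mdelete E r L)) L (U0 L))"

definition phi :: "'a set \<Rightarrow> ('a set \<Rightarrow> nat) list \<Rightarrow> ('a set \<Rightarrow> nat) list" where
  "phi E Ms = map (phi_matroid E) Ms"

definition Delta :: "'a set \<Rightarrow> ('a set \<Rightarrow> int) \<Rightarrow> nat \<Rightarrow> ('a set \<Rightarrow> nat) list set" where
  "Delta E \<rho> k = {Ns. length Ns = k \<and> (\<forall>N\<in>set Ns. matroid_rank E N) \<and>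
                     (\<forall>X. X \<subseteq> E \<longrightarrow> \<rho> X = (\<Sum>N\<leftarrow>Ns. int (N X)))}"

definition chrom_poly :: "'a set \<Rightarrow> ('a set \<Rightarrow> int) \<Rightarrow> rat poly" where
  "chrom_poly E \<rho> = (THE p. \<forall>k::nat. k > 0 \<longrightarrow> poly p (of_nat k) = of_nat (card (Delta E \<rho> k)))"

end

theory Submission
  imports Defs
begin

context
  fixes E :: "'a set" and r :: "'a set \<Rightarrow> nat"
  assumes mr: "matroid_rank E r" and fin: "finite E"
begin

lemma mr_canon: "r X = r (X \<inter> E)"
  using mr unfolding matroid_rank_def by (elim conjE) (erule spec)

lemma mr_card: "X \<subseteq> E \<Longrightarrow> r X \<le> card X"
  using mr unfolding matroid_rank_def by (elim conjE) (erule allE, erule mp)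

lemma mr_mono: "X \<subseteq> Y \<Longrightarrow> Y \<subseteq> E \<Longrightarrow> r X \<le> r Y"
  using mr unfolding matroid_rank_def by (elim conjE) (drule spec[of _ X], drule spec[of _ Y], erule mp, rule conjI)

lemma mr_submod: "X \<subseteq> E \<Longrightarrow> Y \<subseteq> E \<Longrightarrow> r (X \<union> Y) + r (X \<inter> Y) \<le> r X + r Y"
  using mr unfolding matroid_rank_def by (elim conjE) (drule spec[of _ X], drule spec[of _ Y], erule mp, rule conjI)

lemma mr_empty: "r {} = 0"
  using mr_card[of "{}"] by simp

lemma mr_subadd: "X \<subseteq> E \<Longrightarrow> Y \<subseteq> E \<Longrightarrow> r (X \<union> Y) \<le> r X + r Y"
  using mr_submod[of X Y] by linarith

lemma mr_single: "e \<in> E \<Longrightarrow> r {e} \<le> 1"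
  using mr_card[of "{e}"] by simp

lemma mr_add_loops: "finite F \<Longrightarrow> F \<subseteq> loops E r \<Longrightarrow> Z \<subseteq> E \<Longrightarrow> r (Z \<union> F) = r Z"
proof (induction F rule: finite_induct)
  case empty
  then show ?case by simp
next
  case (insert l F)
  have l: "l \<in> E" "r {l} = 0" using insert.prems unfolding loops_def by auto
  have F: "F \<subseteq> E" using insert.prems unfolding loops_def by auto
  have "r ((Z \<union> F) \<union> {l}) \<le> r (Z \<union> F) + r {l}"
    using mr_subadd[of "Z \<union> F" "{l}"] l F insert.prems by auto
  moreover have "r (Z \<union> F) \<le> r ((Z \<union> F) \<union> {l})"
    using mr_mono[of "Z \<union> F" "Z \<union> F \<union> {l}"] l F insert.prems by auto
  ultimately have "r ((Z \<union> F) \<union> {l}) = r (Z \<union> F)" using l by linarith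
  then show ?case using insert by (simp add: Un_insert_right)
qed

lemma mr_del_loops: "Y \<subseteq> E \<Longrightarrow> r (Y - loops E r) = r Y"
proof -
  assume Y: "Y \<subseteq> E"
  have "r ((Y - loops E r) \<union> (Y \<inter> loops E r)) = r (Y - loops E r)"
  proof (rule mr_add_loops)
    show "finite (Y \<inter> loops E r)" using fin Y by (meson finite_Int finite_subset)
  qed (use Y in auto)
  moreover have "(Y - loops E r) \<union> (Y \<inter> loops E r) = Y" by blast
  ultimately show ?thesis by simp
qed

lemma card_nonloops: "int (card (X \<inter> E - loops E r)) = (\<Sum>e\<in>X \<inter> E. int (r {e}))"
proof -
  have f: "finite (X \<inter> E)" using fin by simp
  have "(\<Sum>e\<in>X \<inter> E. int (r {e})) = (\<Sum>e\<in>X \<inter> E \<inter> loops E r. int (r {e})) + (\<Sum>e\<in>X \<inter> E - loops E r. int (r {e}))"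
    using sum.Int_Diff[OF f, of _ "loops E r"] by blast
  also have "(\<Sum>e\<in>X \<inter> E \<inter> loops E r. int (r {e})) = 0"
    by (rule sum.neutral) (auto simp: loops_def)
  also have "(\<Sum>e\<in>X \<inter> E - loops E r. int (r {e})) = (\<Sum>e\<in>X \<inter> E - loops E r. 1)"
  proof (rule sum.cong)
    fix e assume "e \<in> X \<inter> E - loops E r"
    then have "e \<in> E" "r {e} \<noteq> 0" by (auto simp: loops_def)
    then show "int (r {e}) = 1" using mr_single[of e] by linarith
  qed simp
  finally show ?thesis by simp
qed

lemma phi_formula:
  "int (phi_matroid E r X) = int (card (X \<inter> E - loops E r)) + int (r (E - X)) - int (r E)"
proof -
  define L where "L = loops E r"
  have LE: "L \<subseteq> E" unfolding L_def loops_def by auto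
  have eq0: "phi_matroid E r X = card (X \<inter> (E - L) \<inter> (E - L)) + r ((E - L - X \<inter> (E - L)) \<inter> (E - L)) - r ((E - L) \<inter> (E - L)) + 0"
    unfolding phi_matroid_def L_def[symmetric] Let_def direct_sum_def mdual_def mdelete_def U0_def
    by (rule refl)
  have 1: "X \<inter> (E - L) \<inter> (E - L) = X \<inter> (E - L)" by blast
  have 2: "(E - L - X \<inter> (E - L)) \<inter> (E - L) = E - L - X" by blast
  have 3: "(E - L) \<inter> (E - L) = E - L" by blast
  have eq: "phi_matroid E r X = card (X \<inter> (E - L)) + r ((E - L) - X) - r (E - L)"
    using eq0 unfolding 1 2 3 by simp
  have a: "r ((E - L) - X) = r (E - X)"
  proof -
    have "(E - L) - X = (E - X) - L" by blast
    then show ?thesis using mr_del_loops[of "E - X"] unfolding L_def by simp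
  qed
  have b: "r (E - L) = r E" using mr_del_loops[of E] unfolding L_def by simp
  have c: "X \<inter> (E - L) = X \<inter> E - L" by blast
  have "r E \<le> r (E - X) + r (X \<inter> E)"
  proof -
    have "(E - X) \<union> (X \<inter> E) = E" by blast
    then show ?thesis using mr_subadd[of "E - X" "X \<inter> E"] by simp
  qed
  moreover have "r (X \<inter> E) = r (X \<inter> E - L)" using mr_del_loops[of "X \<inter> E"] unfolding L_def by simp
  moreover have "r (X \<inter> E - L) \<le> card (X \<inter> E - L)" by (rule mr_card) auto
  ultimately have le: "r E \<le> r (E - X) + card (X \<inter> E - L)" by linarith
  show ?thesis unfolding eq a b c L_def[symmetric] using le by simp
qed


lemma phi_is_matroid: "matroid_rank E (phi_matroid E r)"
proof -
  define L where "L = loops E r"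
  define p where "p = phi_matroid E r"
  have pf: "\<And>X. int (p X) = int (card (X \<inter> E - L)) + int (r (E - X)) - int (r E)"
    unfolding p_def L_def by (rule phi_formula)
  have fs: "\<And>A. finite (A \<inter> E - L)" using fin by blast
  have c1: "p X = p (X \<inter> E)" for X
  proof -
    have "X \<inter> E \<inter> E - L = X \<inter> E - L" "E - X \<inter> E = E - X" by blast+
    then have "int (p X) = int (p (X \<inter> E))" using pf[of X] pf[of "X \<inter> E"] by simp
    then show ?thesis by simp
  qed
  have c2: "p X \<le> card X" if X: "X \<subseteq> E" for X
  proof -
    have "card (X \<inter> E - L) \<le> card X" using X fin by (meson Diff_subset finite_subset inf.cobounded1 card_mono order_trans)
    moreover have "r (E - X) \<le> r E" by (rule mr_mono) auto
    ultimately have "int (p X) \<le> int (card X)" using pf[of X] by linarith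
    then show ?thesis by simp
  qed
  have c3: "p X \<le> p Y" if XY: "X \<subseteq> Y" "Y \<subseteq> E" for X Y
  proof -
    have e1: "E - X = (E - Y) \<union> (Y - X)" using XY by blast
    have "r (E - X) \<le> r (E - Y) + r (Y - X)" unfolding e1 by (rule mr_subadd) (use XY in auto)
    moreover have "r (Y - X) = r (Y - X - L)" unfolding L_def by (rule mr_del_loops[symmetric]) (use XY in auto)
    moreover have "r (Y - X - L) \<le> card (Y - X - L)" by (rule mr_card) (use XY in auto)
    moreover have "card (Y \<inter> E - L) = card (X \<inter> E - L) + card (Y - X - L)"
    proof -
      have "Y \<inter> E - L = (X \<inter> E - L) \<union> (Y - X - L)" using XY by blast
      moreover have "finite (Y - X - L)" using XY fin by (meson Diff_subset finite_subset order_trans)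
      ultimately show ?thesis using fs[of X] by (simp add: card_Un_disjoint Int_Diff Diff_Int_distrib2 inf_commute disjoint_iff)
    qed
    ultimately have "int (p X) \<le> int (p Y)" using pf[of X] pf[of Y] by linarith
    then show ?thesis by simp
  qed
  have c4: "p (X \<union> Y) + p (X \<inter> Y) \<le> p X + p Y" if XY: "X \<subseteq> E" "Y \<subseteq> E" for X Y
  proof -
    have "card ((X \<union> Y) \<inter> E - L) + card ((X \<inter> Y) \<inter> E - L) = card (X \<inter> E - L) + card (Y \<inter> E - L)"
    proof -
      have "(X \<union> Y) \<inter> E - L = (X \<inter> E - L) \<union> (Y \<inter> E - L)" "(X \<inter> Y) \<inter> E - L = (X \<inter> E - L) \<inter> (Y \<inter> E - L)" by blast+
      then show ?thesis using card_Un_Int[OF fs[of X] fs[of Y]] by simp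
    qed
    moreover have "r (E - (X \<union> Y)) + r (E - (X \<inter> Y)) \<le> r (E - X) + r (E - Y)"
    proof -
      have "E - (X \<union> Y) = (E - X) \<inter> (E - Y)" "E - (X \<inter> Y) = (E - X) \<union> (E - Y)" by blast+
      then show ?thesis using mr_submod[of "E - X" "E - Y"] by simp
    qed
    ultimately have "int (p (X \<union> Y)) + int (p (X \<inter> Y)) \<le> int (p X) + int (p Y)"
      using pf[of X] pf[of Y] pf[of "X \<union> Y"] pf[of "X \<inter> Y"] by linarith
    then show ?thesis by simp
  qed
  show ?thesis unfolding matroid_rank_def p_def[symmetric] using c1 c2 c3 c4 by blast
qed

lemma phi_loops:
  assumes nc: "\<forall>e\<in>E. r (E - {e}) = r E"
  shows "loops E (phi_matroid E r) = loops E r"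
proof -
  have "phi_matroid E r {e} = 0 \<longleftrightarrow> r {e} = 0" if e: "e \<in> E" for e
  proof -
    have "int (phi_matroid E r {e}) = int (card ({e} \<inter> E - loops E r)) + int (r (E - {e})) - int (r E)"
      by (rule phi_formula)
    moreover have "r (E - {e}) = r E" using nc e by blast
    moreover have "{e} \<inter> E - loops E r = (if r {e} = 0 then {} else {e})"
      using e by (auto simp: loops_def)
    ultimately show ?thesis by (auto split: if_splits)
  qed
  then show ?thesis unfolding loops_def by auto
qed

end

lemma phi_phi:
  fixes E :: "'a set" and r :: "'a set \<Rightarrow> nat"
  assumes mr: "matroid_rank E r" and fin: "finite E"
  assumes nc: "\<forall>e\<in>E. r (E - {e}) = r E"
  shows "phi_matroid E (phi_matroid E r) = r"
proof
  fix X
  define L where "L = loops E r"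
  define p where "p = phi_matroid E r"
  have pm: "matroid_rank E p" unfolding p_def by (rule phi_is_matroid[OF mr fin])
  have pL: "loops E p = L" unfolding p_def L_def by (rule phi_loops[OF mr fin nc])
  have pf: "\<And>X. int (p X) = int (card (X \<inter> E - L)) + int (r (E - X)) - int (r E)"
    unfolding p_def L_def by (rule phi_formula[OF mr fin])
  have ppf: "int (phi_matroid E p X) = int (card (X \<inter> E - L)) + int (p (E - X)) - int (p E)"
    using phi_formula[OF pm fin, of X] unfolding pL .
  have a: "E - (E - X) = X \<inter> E" "(E - X) \<inter> E - L = E - X - L" "E \<inter> E - L = E - L" "E - E = {}" by blast+
  have cd: "card (E - L) = card (X \<inter> E - L) + card (E - X - L)"
  proof -
    have "E - L = (X \<inter> E - L) \<union> (E - X - L)" by blast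
    moreover have "finite (E - X - L)" "finite (X \<inter> E - L)" using fin by auto
    ultimately show ?thesis by (metis Diff_Int2 Diff_disjoint card_Un_disjoint inf_commute Int_Diff Diff_Int_distrib2 disjoint_iff) 
  qed
  have "int (phi_matroid E p X) = int (r (X \<inter> E))"
    using ppf pf[of "E - X"] pf[of E] unfolding a using cd mr_empty[OF mr fin] by simp
  then show "phi_matroid E (phi_matroid E r) X = r X" unfolding p_def[symmetric] using mr_canon[OF mr fin, of X] by simp
qed



lemma sum_list_eq_le:
  fixes f g :: "'b \<Rightarrow> int"
  shows "\<forall>x\<in>set xs. f x \<le> g x \<Longrightarrow> sum_list (map f xs) = sum_list (map g xs) \<Longrightarrow> \<forall>x\<in>set xs. f x = g x"
proof (induction xs)
  case Nil
  then show ?case by simp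
next
  case (Cons a xs)
  have le: "\<forall>x\<in>set xs. f x \<le> g x" using Cons.prems(1) by simp
  have "sum_list (map f xs) \<le> sum_list (map g xs)"
    using le by (intro sum_list_mono) auto
  moreover have "f a \<le> g a" using Cons.prems(1) by simp
  moreover have "f a + sum_list (map f xs) = g a + sum_list (map g xs)" using Cons.prems(2) by simp
  ultimately have 1: "f a = g a" and 2: "sum_list (map f xs) = sum_list (map g xs)" by linarith+
  have "\<forall>x\<in>set xs. f x = g x" using Cons.IH[OF le 2] .
  then show ?case using 1 by simp
qed

lemma sum_list_sum_swap:
  fixes f :: "'b \<Rightarrow> 'c \<Rightarrow> int"
  shows "(\<Sum>N\<leftarrow>Ns. \<Sum>e\<in>A. f N e) = (\<Sum>e\<in>A. \<Sum>N\<leftarrow>Ns. f N e)"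
  by (induction Ns) (simp_all add: sum.distrib)

lemma Delta_nocoloop:
  assumes "Ns \<in> Delta E \<sigma> k" "e \<in> E" "\<sigma> (E - {e}) = \<sigma> E" and fin: "finite E"
  shows "\<forall>N\<in>set Ns. N (E - {e}) = N E"
proof -
  have mrs: "\<forall>N\<in>set Ns. matroid_rank E N" and sm: "\<forall>X. X \<subseteq> E \<longrightarrow> \<sigma> X = (\<Sum>N\<leftarrow>Ns. int (N X))"
    using assms(1) unfolding Delta_def by auto
  have "\<forall>N\<in>set Ns. int (N (E - {e})) \<le> int (N E)"
    using mrs by (auto intro: mr_mono[OF _ fin])
  moreover have "(\<Sum>N\<leftarrow>Ns. int (N (E - {e}))) = (\<Sum>N\<leftarrow>Ns. int (N E))"
    using sm assms(3) by (metis Diff_subset order_refl)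
  ultimately have "\<forall>N\<in>set Ns. int (N (E - {e})) = int (N E)"
    by (rule sum_list_eq_le)
  then show ?thesis by simp
qed

lemma Delta_cong:
  assumes "\<forall>X. X \<subseteq> E \<longrightarrow> \<sigma> X = \<tau> X"
  shows "Delta E \<sigma> k = Delta E \<tau> k"
  using assms unfolding Delta_def by auto

lemma phi_Delta:
  assumes fin: "finite E" and si: "\<forall>e\<in>E. \<sigma> {e} = int i" and Ns: "Ns \<in> Delta E \<sigma> k"
  shows "phi E Ns \<in> Delta E (i_dual i E \<sigma>) k"
proof -
  have mrs: "\<forall>N\<in>set Ns. matroid_rank E N" and sm: "\<forall>X. X \<subseteq> E \<longrightarrow> \<sigma> X = (\<Sum>N\<leftarrow>Ns. int (N X))"
    and len: "length Ns = k"
    using Ns unfolding Delta_def by auto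
  have "i_dual i E \<sigma> X = (\<Sum>N\<leftarrow>Ns. int (phi_matroid E N X))" if X: "X \<subseteq> E" for X
  proof -
    have XE: "X \<inter> E = X" using X by blast
    have "(\<Sum>N\<leftarrow>Ns. int (phi_matroid E N X)) = (\<Sum>N\<leftarrow>Ns. (\<Sum>e\<in>X. int (N {e})) + int (N (E - X)) - int (N E))"
    proof (rule arg_cong[where f = sum_list], rule map_cong[OF refl])
      fix N assume "N \<in> set Ns"
      then have m: "matroid_rank E N" using mrs by blast
      show "int (phi_matroid E N X) = (\<Sum>e\<in>X. int (N {e})) + int (N (E - X)) - int (N E)"
        using phi_formula[OF m fin, of X] card_nonloops[OF m fin, of X] unfolding XE by simp
    qed
    also have "\<dots> = (\<Sum>N\<leftarrow>Ns. \<Sum>e\<in>X. int (N {e})) + (\<Sum>N\<leftarrow>Ns. int (N (E - X))) - (\<Sum>N\<leftarrow>Ns. int (N E))"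
      by (simp add: sum_list_addf sum_list_subtractf)
    also have "(\<Sum>N\<leftarrow>Ns. \<Sum>e\<in>X. int (N {e})) = (\<Sum>e\<in>X. \<sigma> {e})"
      unfolding sum_list_sum_swap using sm X by (intro sum.cong) auto
    also have "\<dots> = int i * int (card X)"
    proof -
      have "(\<Sum>e\<in>X. \<sigma> {e}) = (\<Sum>e\<in>X. int i)" using si X by (intro sum.cong) auto
      then show ?thesis by (simp add: mult.commute)
    qed
    also have "(\<Sum>N\<leftarrow>Ns. int (N (E - X))) = \<sigma> (E - X)" using sm by auto
    also have "(\<Sum>N\<leftarrow>Ns. int (N E)) = \<sigma> E" using sm by auto
    finally show ?thesis unfolding i_dual_def by simp
  qed
  then show ?thesis
    unfolding Delta_def phi_def using len mrs phi_is_matroid[OF _ fin] by (simp add: comp_def)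
qed

lemma phi_phi_Delta:
  assumes fin: "finite E" and nc: "\<forall>e\<in>E. \<sigma> (E - {e}) = \<sigma> E" and Ns: "Ns \<in> Delta E \<sigma> k"
  shows "phi E (phi E Ns) = Ns"
proof -
  have "phi_matroid E (phi_matroid E N) = N" if N: "N \<in> set Ns" for N
  proof (rule phi_phi)
    show "matroid_rank E N" using Ns N unfolding Delta_def by auto
    show "finite E" by fact
    show "\<forall>e\<in>E. N (E - {e}) = N E" using Delta_nocoloop[OF Ns _ _ fin] nc N by blast
  qed
  then show ?thesis unfolding phi_def by (simp add: map_idI)
qed

theorem corollary4p3:
  fixes E :: "'a set" and \<rho> :: "'a set \<Rightarrow> int" and i :: nat
  assumes "finite E"
    and "i_polymatroid i E \<rho>"
    and "\<forall>e\<in>E. \<rho> (E - {e}) = \<rho> E"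
    and "\<forall>e\<in>E. i_dual i E \<rho> (E - {e}) = i_dual i E \<rho> E"
  shows "(\<forall>k::nat. k > 0 \<longrightarrow>
            bij_betw (phi E) (Delta E \<rho> k) (Delta E (i_dual i E \<rho>) k))
         \<and> chrom_poly E \<rho> = chrom_poly E (i_dual i E \<rho>)"
proof -
  note fin = assms(1)
  have r0: "\<rho> {} = 0" using assms(2) unfolding i_polymatroid_def polymatroid_def by blast
  have s1: "\<forall>e\<in>E. \<rho> {e} = int i"
  proof
    fix e assume e: "e \<in> E"
    have c: "card (E - {e}) = card E - 1" "card E \<ge> 1" using e fin by (auto simp: card_gt_0_iff Suc_le_eq)
    have ee: "E - (E - {e}) = {e}" using e by blast
    have "i_dual i E \<rho> (E - {e}) = i_dual i E \<rho> E" using assms(4) e by blast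
    then have "int i * int (card E - 1) - \<rho> E + \<rho> {e} = int i * int (card E) - \<rho> E + \<rho> {}"
      unfolding i_dual_def ee c(1) by simp
    then show "\<rho> {e} = int i" using c(2) r0 by (simp add: of_nat_diff algebra_simps)
  qed
  have s2: "\<forall>e\<in>E. i_dual i E \<rho> {e} = int i"
    using assms(3) unfolding i_dual_def by simp
  have dd: "\<forall>X. X \<subseteq> E \<longrightarrow> i_dual i E (i_dual i E \<rho>) X = \<rho> X"
  proof (intro allI impI)
    fix X assume X: "X \<subseteq> E"
    have "card (E - X) = card E - card X" "card X \<le> card E" using X fin by (auto simp: card_Diff_subset card_mono finite_subset)
    moreover have "E - (E - X) = X" using X by blast
    ultimately show "i_dual i E (i_dual i E \<rho>) X = \<rho> X" unfolding i_dual_def using r0 by (simp add: of_nat_diff algebra_simps)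
  qed
  have bij: "bij_betw (phi E) (Delta E \<rho> k) (Delta E (i_dual i E \<rho>) k)" for k
  proof (rule bij_betw_byWitness[where f' = "phi E"])
    show "\<forall>a\<in>Delta E \<rho> k. phi E (phi E a) = a" using phi_phi_Delta[OF fin assms(3)] by blast
    show "\<forall>a\<in>Delta E (i_dual i E \<rho>) k. phi E (phi E a) = a" using phi_phi_Delta[OF fin assms(4)] by blast
    show "phi E ` Delta E \<rho> k \<subseteq> Delta E (i_dual i E \<rho>) k" using phi_Delta[OF fin s1] by blast
    show "phi E ` Delta E (i_dual i E \<rho>) k \<subseteq> Delta E \<rho> k"
      using phi_Delta[OF fin s2] Delta_cong[OF dd] by blast
  qed
  have cards: "card (Delta E \<rho> k) = card (Delta E (i_dual i E \<rho>) k)" for k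
    using bij_betw_same_card[OF bij] .
  show ?thesis using bij unfolding chrom_poly_def cards by simp
qed

end
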